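(* Let $q\ge2$ be a prime power and let $f\in\mathbb{F}_q[x]$ with $\deg f\ge 2$. Then $$E(f)\le 1+e^\gamma\min\left\{\frac{\deg f}{q},\ \frac{\log(\deg f)}{\log q}\right\},$$ where $\gamma$ is Euler's constant.
   Context: For $f\in\mathbb{F}_q[x]$, $|f|=q^{\deg f}$. The letter $p$ denotes a monic irreducible polynomial in $\mathbb{F}_q[x]$, and $E(f)=\prod_{p\mid f}\left(1+\frac{1}{|p|}\right)$, the product over monic irreducible divisors $p$ of $f$. *)

theory Defs
  imports "HOL-Analysis.Analysis" "HOL-Computational_Algebra.Computational_Algebra"
begin

definition pnorm :: "'a::{field,finite} poly \<Rightarrow> real" where
  "pnorm f = real CARD('a) ^ degree f"

definition E_fun :: "'a::{field,finite} poly \<Rightarrow> real" where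
  "E_fun f = (\<Prod>p\<in>{p. lead_coeff p = 1 \<and> irreducible p \<and> p dvd f}. 1 + 1 / pnorm p)"

end

theory Submission
  imports Defs
begin


lemma e_le: "exp (1::real) \<le> 274/100"
proof -
  have "(1 - 1 / real 100) ^ 100 \<le> exp (-1::real)"
    using exp_ge_one_minus_x_over_n_power_n[of 1 100] by simp
  moreover have "(100/274::real) \<le> (1 - 1 / real 100) ^ 100" by (simp add: power_divide)
  ultimately have "100/274 \<le> exp (-1::real)" by linarith
  then have "inverse (exp (-1::real)) \<le> inverse (100/274)" by (intro le_imp_inverse_le) auto
  then show ?thesis by (simp add: exp_minus)
qed

lemma E_ge: "exp euler_mascheroni \<ge> (17734/10000::real)"
proof -
  have "(1 + (19/33) / real 100) ^ 100 \<le> exp (19/33::real)"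
    by (rule exp_ge_one_plus_x_over_n_power_n) auto
  moreover have "(17734/10000::real) \<le> (1 + (19/33) / real 100) ^ 100" by (simp add: power_divide)
  moreover have "exp (19/33::real) \<le> exp euler_mascheroni" using euler_mascheroni_gt_19_over_33 by simp
  ultimately show ?thesis by linarith
qed

lemma E_le: "exp euler_mascheroni \<le> (182/100::real)"
proof -
  have "exp euler_mascheroni \<le> exp (13/22::real)" using euler_mascheroni_less_13_over_22 by simp
  moreover have "exp (13/22::real) ^ 22 = exp 13" by (simp flip: exp_of_nat_mult)
  moreover have "exp (13::real) = exp 1 ^ 13" by (simp flip: exp_of_nat_mult)
  moreover have "exp (1::real) ^ 13 \<le> (274/100)^13" using e_le by (intro power_mono) auto
  moreover have "(274/100::real)^13 \<le> (182/100)^22" by (simp add: power_divide)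
  ultimately have "exp (13/22::real) ^ 22 \<le> (182/100)^22" by linarith
  then have "exp (13/22::real) ^ Suc 21 \<le> (182/100)^Suc 21" by simp
  then have "exp (13/22::real) \<le> 182/100"
    by (rule power_le_imp_le_base) auto
  then show ?thesis using \<open>exp euler_mascheroni \<le> exp (13/22::real)\<close> by linarith
qed

lemma exp_cvx: "0 \<le> s \<Longrightarrow> s \<le> 1 \<Longrightarrow> exp ((1-s)*a + s*b) \<le> (1-s)*exp a + s*exp (b::real)"
  using convex_onD[OF exp_convex, of s a b] by simp

lemma harm_bound: assumes "n \<ge> 1" shows "exp (harm n) \<le> 1 + exp euler_mascheroni * real n"
proof (cases "n = 1")
  case True
  then show ?thesis using e_le E_ge by (simp add: harm_expand)
next
  case False
  then obtain m where m: "n = Suc m" "m \<ge> 1" using assms by (cases n) auto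
  define E where "E = exp (euler_mascheroni::real)"
  define M where "M = real n + 1"
  have M3: "M \<ge> 3" using m by (simp add: M_def)
  have low: "euler_mascheroni \<ge> harm (Suc m) - ln (real_of_nat (m + 2)) + 1/real_of_nat (2 * (m + 2))"
    by (rule euler_mascheroni_lower)
  have h0: "harm (Suc m) - ln (real_of_nat (m + 2)) + 1/real_of_nat (2 * (m + 2)) = harm n - ln M + 1/(2*M)"
    by (simp add: m M_def algebra_simps)
  have h: "harm n \<le> euler_mascheroni + ln M - 1/(2*M)" using low unfolding h0 by simp
  have "exp (harm n) \<le> exp (euler_mascheroni + ln M - 1/(2*M))" using h by simp
  also have "\<dots> = E * M / exp (1/(2*M))" using M3
    by (simp add: E_def exp_diff exp_add)
  also have "\<dots> \<le> E * M / (1 + 1/(2*M) + (1/(2*M))^2/2)"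
    using M3 exp_lower_Taylor_quadratic[of "1/(2*M)"] E_def
    by (intro divide_left_mono) (auto intro!: mult_pos_pos add_pos_nonneg)
  also have "\<dots> \<le> 1 + E * real n"
  proof -
    have E1: "E \<le> 182/100" "E \<ge> 1" unfolding E_def using E_le E_ge by linarith+
    have key: "E * (4*M^2 + 3*M + 1) \<le> 8*M^2 + 4*M + 1"
    proof -
      have "E * (4*M^2 + 3*M + 1) \<le> 182/100 * (4*M^2 + 3*M + 1)"
        using E1 M3 by (intro mult_right_mono) auto
      also have "\<dots> \<le> 8*M^2 + 4*M + 1" using M3 
      proof -
        have a: "3*M \<le> M*M" using M3 by (intro mult_right_mono) auto
        have "\<And>X. 3*M \<le> X \<Longrightarrow> 182/100*(4*X+3*M+1) \<le> 8*X+4*M+(1::real)" using M3 by (simp add: field_simps)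
        from this[OF a] show ?thesis unfolding power2_eq_square .
      qed
      finally show ?thesis .
    qed
    have pos: "1 + 1/(2*M) + (1/(2*M))^2/2 > 0" using M3 by (auto intro!: add_pos_nonneg)
    have eq: "1 + 1/(2*M) + (1/(2*M))^2/2 = (8*M^2+4*M+1)/(8*M^2)" using M3
      by (simp add: field_simps power2_eq_square)
    have "E * M \<le> (1 + E*(M-1)) * ((8*M^2+4*M+1)/(8*M^2))"
    proof -
      have "E*M*(8*M^2) \<le> (1 + E*(M-1)) * (8*M^2+4*M+1)"
        using key by (simp add: algebra_simps power2_eq_square power3_eq_cube) 
      then show ?thesis using M3 by (simp add: field_simps)
    qed
    then have "E * M \<le> (1 + E*(M-1)) * (1 + 1/(2*M) + (1/(2*M))^2/2)" unfolding eq .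
    then have "E * M / (1 + 1/(2*M) + (1/(2*M))^2/2) \<le> 1 + E*(M-1)"
      by (subst pos_divide_le_eq[OF pos])
    then show ?thesis by (simp add: M_def)
  qed
  finally show ?thesis by (simp add: E_def)
qed

lemma T_le_lin:
  fixes P :: "'b set" and g :: "'b \<Rightarrow> nat" and q n :: nat
  assumes fin: "finite P" and g1: "\<And>p. p\<in>P \<Longrightarrow> g p \<ge> 1" and sumg: "(\<Sum>p\<in>P. g p) \<le> n"
    and q2: "q \<ge> 2"
  shows "(\<Sum>p\<in>P. (1/real q)^(g p)) \<le> real n / real q"
proof -
  have "(\<Sum>p\<in>P. (1/real q)^(g p)) \<le> (\<Sum>p\<in>P. real (g p) / real q)"
  proof (rule sum_mono)
    fix p assume p: "p \<in> P"
    have "(1/real q)^(g p) = (1/real q) * (1/real q)^(g p - 1)"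
      using g1[OF p] by (simp add: power_eq_if)
    also have "\<dots> \<le> 1/real q * 1" using q2
      by (intro mult_left_mono power_le_one) auto
    also have "\<dots> \<le> real (g p) / real q" using g1[OF p] q2 by (simp add: divide_right_mono)
    finally show "(1/real q)^(g p) \<le> real (g p) / real q" .
  qed
  also have "\<dots> = real (\<Sum>p\<in>P. g p) / real q" by (simp add: sum_divide_distrib)
  also have "\<dots> \<le> real n / real q"
  proof -
    have "real (\<Sum>p\<in>P. g p) \<le> real n" using sumg by (simp only: of_nat_le_iff)
    then show ?thesis by (intro divide_right_mono) auto
  qed
  finally show ?thesis .
qed

lemma T_le_harm:
  fixes P :: "'b set" and g :: "'b \<Rightarrow> nat" and q n J :: nat
  assumes fin: "finite P" and g1: "\<And>p. p\<in>P \<Longrightarrow> g p \<ge> 1" and sumg: "(\<Sum>p\<in>P. g p) \<le> n"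
    and cnt: "\<And>d. d \<ge> 1 \<Longrightarrow> card {p\<in>P. g p = d} * d \<le> q^d" and q2: "q \<ge> 2"
    and J1: "J \<ge> 1" and qJ: "q^J \<le> n"
  shows "(\<Sum>p\<in>P. (1/real q)^(g p)) \<le> harm J + (real n - real q^J) / (real q^(J+1)) / (J+1)"
proof -
  define l where "l = 1 / ((real J + 1) * real q^(J+1))"
  define c where "c d = (if d \<le> J then (1/real q)^d - l * d else 0)" for d :: nat
  have qpos: "real q > 0" using q2 by simp
  have lpos: "l > 0" unfolding l_def using qpos by simp
  have ptw: "(1/real q)^d \<le> l * d + c d" if "d \<ge> 1" for d
  proof (cases "d \<le> J")
    case True then show ?thesis by (simp add: c_def)
  next
    case False
    have "(real J + 1) * real q^(J+1) \<le> real d * real q^d"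
      using False qpos q2 by (intro mult_mono power_increasing) auto
    have "1 / real q^d = real d / (real d * real q^d)" using that qpos by simp
    also have "\<dots> \<le> real d / ((real J + 1) * real q^(J+1))"
      using \<open>(real J + 1) * real q^(J+1) \<le> real d * real q^d\<close> qpos that
      by (intro divide_left_mono mult_pos_pos) auto
    finally have "1 / real q^d \<le> real d / ((real J + 1) * real q^(J+1))" .
    then show ?thesis using False by (simp add: c_def l_def power_one_over)
  qed
  have "(\<Sum>p\<in>P. (1/real q)^(g p)) \<le> (\<Sum>p\<in>P. l * g p + c (g p))"
    using ptw g1 by (intro sum_mono) auto
  also have "\<dots> = l * real (\<Sum>p\<in>P. g p) + (\<Sum>p\<in>P. c (g p))"
    by (simp add: sum.distrib sum_distrib_left)
  also have "(\<Sum>p\<in>P. c (g p)) = (\<Sum>p\<in>{p\<in>P. g p \<le> J}. c (g p))"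
    using fin by (intro sum.mono_neutral_right) (auto simp: c_def)
  also have "\<dots> = (\<Sum>d\<in>{1..J}. (\<Sum>p\<in>{x \<in> {p\<in>P. g p \<le> J}. g x = d}. c (g p)))"
    using fin g1 by (intro sum.group[symmetric]) auto
  also have "\<dots> = (\<Sum>d\<in>{1..J}. real (card {p\<in>P. g p = d}) * c d)"
  proof (intro sum.cong refl)
    fix d assume d: "d \<in> {1..J}"
    have "{x \<in> {p\<in>P. g p \<le> J}. g x = d} = {p\<in>P. g p = d}" using d by auto
    then show "(\<Sum>p\<in>{x \<in> {p\<in>P. g p \<le> J}. g x = d}. c (g p)) = real (card {p\<in>P. g p = d}) * c d"
      by simp
  qed
  also have "\<dots> \<le> (\<Sum>d\<in>{1..J}. (real q^d / d) * c d)"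
  proof (intro sum_mono mult_right_mono)
    fix d assume d: "d \<in> {1..J}"
    have "real (card {p\<in>P. g p = d} * d) \<le> real (q^d)" using cnt[of d] d by (simp only: of_nat_le_iff atLeastAtMost_iff)
    then show "real (card {p\<in>P. g p = d}) \<le> real q^d / real d" using d by (simp add: field_simps)
    have A: "real d * real q^d \<le> (real J + 1) * real q^(J+1)" using d q2
      by (intro mult_mono power_increasing) auto
    have "l * d = real d / ((real J + 1) * real q^(J+1))" unfolding l_def by simp
    also have "\<dots> \<le> real d / (real d * real q^d)"
      using A qpos d by (intro divide_left_mono mult_pos_pos) auto
    also have "\<dots> = (1/real q)^d" using d by (simp add: power_one_over)
    finally have "l * d \<le> (1/real q)^d" .
    then show "0 \<le> c d" using d by (simp add: c_def)
  qed
  also have "\<dots> = (\<Sum>d\<in>{1..J}. 1 / real d - l * real q^d)"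
    using qpos by (intro sum.cong refl) (auto simp: c_def field_simps power_one_over)
  also have "\<dots> = harm J - l * (\<Sum>d\<in>{1..J}. real q^d)"
    by (simp add: harm_def sum_subtractf sum_distrib_left inverse_eq_divide)
  also have "(\<Sum>d\<in>{1..J}. real q^d) \<ge> real q^J"
    using J1 by (intro member_le_sum) auto
  then have "harm J - l * (\<Sum>d\<in>{1..J}. real q^d) \<le> harm J - l * real q^J"
    using lpos by (intro diff_left_mono mult_left_mono) auto
  finally have "(\<Sum>p\<in>P. (1/real q)^(g p)) \<le> l * real (\<Sum>p\<in>P. g p) + (harm J - l * real q^J)"
    by linarith
  also have "\<dots> \<le> l * real n + (harm J - l * real q^J)"
  proof -
    have "real (\<Sum>p\<in>P. g p) \<le> real n" using sumg by (simp only: of_nat_le_iff)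
    then show ?thesis using lpos by (intro add_right_mono mult_left_mono) auto
  qed
  also have "\<dots> = harm J + l * (real n - real q^J)" by (simp add: algebra_simps)
  also have "l * (real n - real q^J) = (real n - real q^J) / (real q^(J+1)) / (J+1)"
    unfolding l_def by (simp add: divide_divide_eq_left mult.commute)
  finally show ?thesis .
qed

lemma exp_two_thirds: "exp (2/3::real) \<le> 2"
proof -
  have "exp (2/3::real) ^ 3 = exp 2" by (simp flip: exp_of_nat_mult)
  also have "exp (2::real) = exp 1 ^ 2" by (simp flip: exp_of_nat_mult)
  also have "\<dots> \<le> (274/100)^2" using e_le by (intro power_mono) auto
  also have "\<dots> \<le> 2^3" by (simp add: power_divide)
  finally have "exp (2/3::real) ^ Suc 2 \<le> 2 ^ Suc 2" by simp
  then show ?thesis by (rule power_le_imp_le_base) auto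
qed

lemma ln3_le: "ln (3::real) \<le> 118/100"
proof -
  have "(1 + (118/100) / real 10) ^ 10 \<le> exp (118/100::real)"
    by (rule exp_ge_one_plus_x_over_n_power_n) auto
  moreover have "(3::real) \<le> (1 + (118/100) / real 10) ^ 10" by (simp add: power_divide)
  ultimately have "3 \<le> exp (118/100::real)" by linarith
  then have "ln 3 \<le> ln (exp (118/100::real))" by (subst ln_le_cancel_iff) auto
  then show ?thesis by simp
qed

lemma analytic:
  fixes P :: "'b set" and g :: "'b \<Rightarrow> nat" and q n :: nat
  assumes fin: "finite P" and g1: "\<And>p. p\<in>P \<Longrightarrow> g p \<ge> 1" and sumg: "(\<Sum>p\<in>P. g p) \<le> n"
    and cnt: "\<And>d. d \<ge> 1 \<Longrightarrow> card {p\<in>P. g p = d} * d \<le> q^d" and q2: "q \<ge> 2" and n2: "n \<ge> 2"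
  shows "exp (\<Sum>p\<in>P. (1/real q)^(g p)) \<le>
           1 + exp euler_mascheroni * min (real n / real q) (ln (real n) / ln (real q))"
proof -
  define T where "T = (\<Sum>p\<in>P. (1/real q)^(g p))"
  define E where "E = exp (euler_mascheroni::real)"
  define x where "x = real n / real q"
  define L where "L = ln (real n) / ln (real q)"
  have qpos: "real q > 0" and npos: "real n > 0" using q2 n2 by auto
  have lnq: "ln (real q) > 0" using q2 by simp
  have Eb: "E \<ge> 17734/10000" "E \<le> 182/100" using E_ge E_le by (auto simp: E_def)
  have both: "exp T \<le> 1 + E * x \<and> exp T \<le> 1 + E * L"
  proof (cases "n < q")
    case True
    have Tx: "T \<le> x" unfolding T_def x_def by (rule T_le_lin[OF fin g1 sumg q2])
    have x01: "0 \<le> x" "x \<le> 1" using True qpos by (auto simp: x_def)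
    have "exp x = exp ((1-x)*0 + x*1)" by simp
    also have "\<dots> \<le> (1-x)*exp 0 + x*exp 1" by (rule exp_cvx) (use x01 in auto)
    also have "\<dots> = 1 + (exp 1 - 1) * x" by (simp add: algebra_simps)
    also have "\<dots> \<le> 1 + E * x" using x01 e_le Eb by (intro add_left_mono mult_right_mono) auto
    finally have ex: "exp T \<le> 1 + E * x" using Tx by (meson exp_le_cancel_iff order_trans)
    show ?thesis
    proof (cases "q \<ge> 4")
      case True
      have h: "ln (real q) / real q \<le> ln (real n) / real n"
      proof (cases "n \<ge> 3")
        case True
        then show ?thesis using \<open>n < q\<close> exp_le by (intro ln_x_over_x_mono) auto
      next
        case False
        then have "n = 2" using n2 by auto
        have "ln (real q) / real q \<le> ln (real 4) / real 4"
          using \<open>q \<ge> 4\<close> exp_le by (intro ln_x_over_x_mono) auto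
        also have "ln (real 4) = 2 * ln 2" using ln_realpow[of 2 2] by simp
        finally show ?thesis using \<open>n = 2\<close> by simp
      qed
      have "ln (real q) * real n \<le> ln (real n) * real q" using h qpos npos by (simp add: field_simps)
      then have "x \<le> L" unfolding x_def L_def using qpos lnq by (simp add: field_simps)
      then have "E * x \<le> E * L" using Eb by (intro mult_left_mono) auto
      then show ?thesis using ex by linarith
    next
      case False
      then have q3: "q = 3" and n2': "n = 2" using True n2 by auto
      have "exp T \<le> exp (2/3)" using Tx unfolding x_def q3 n2' by simp
      also have "\<dots> \<le> 2" by (rule exp_two_thirds)
      also have "2 \<le> 1 + E * L"
      proof -
        have "17734/10000 * (2/3) \<le> E * ln (2::real)" using ln2_ge_two_thirds Eb
          by (intro mult_mono) auto
        then have "ln (3::real) \<le> E * ln 2" using ln3_le by linarith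
        then have "1 \<le> E * ln 2 / ln 3" by (simp add: field_simps)
        then show ?thesis unfolding L_def q3 n2' by simp
      qed
      finally show ?thesis using ex by auto
    qed
  next
    case False
    then have nq: "q \<le> n" by simp
    obtain J where J: "q^J \<le> n" "n < q^(J+1)" using ex_power_ivl1[OF q2, of n] n2 by auto
    have J1: "J \<ge> 1" using J nq by (cases J) auto
    have Jr: "real q^J \<le> real n" "real n < real q^(J+1)"
      using J by (simp_all only: of_nat_le_iff of_nat_less_iff of_nat_power[symmetric])
    define s where "s = (real n - real q^J) / real q^(J+1)"
    have "real n - real q^J \<le> real q^(J+1)" using Jr zero_le_power[of "real q" J] qpos by linarith
    then have s01: "0 \<le> s" "s \<le> 1" using Jr qpos by (auto simp: s_def divide_le_eq)
    have ns: "real n = real q^J * (1 + s * real q)" using qpos by (simp add: s_def field_simps)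
    have "T \<le> harm J + s / (J+1)" unfolding T_def s_def by (rule T_le_harm[OF fin g1 sumg cnt q2 J1 J(1)])
    also have "\<dots> = (1-s) * harm J + s * harm (J+1)" by (simp add: harm_Suc field_simps)
    finally have "exp T \<le> exp ((1-s) * harm J + s * harm (J+1))" by simp
    also have "\<dots> \<le> (1-s) * exp (harm J) + s * exp (harm (J+1))" by (rule exp_cvx) (use s01 in auto)
    also have "\<dots> \<le> (1-s) * (1 + E * J) + s * (1 + E * (J+1))"
      using harm_bound[of J] harm_bound[of "J+1"] J1 s01 unfolding E_def
      by (intro add_mono mult_left_mono) auto
    also have "\<dots> = 1 + E * (J + s)" by (simp add: algebra_simps)
    finally have eJ: "exp T \<le> 1 + E * (J + s)" .
    have Jx: "J + s \<le> x"
    proof -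
      have sk: "Suc k \<le> 2^k" for k :: nat by (induct k) auto
      have "J \<le> 2^(J-1)" using sk[of "J-1"] J1 by (cases J) auto
      also have "(2::nat)^(J-1) \<le> q^(J-1)" using q2 by (intro power_mono) auto
      finally have "real J \<le> real q^(J-1)" by (simp only: of_nat_le_iff of_nat_power[symmetric])
      moreover have "s \<le> s * real q^J" using s01 q2 by (simp add: mult_le_cancel_left1)
      moreover have "x = real q^(J-1) + s * real q^J"
      proof -
        have "real q^J = real q * real q^(J-1)" using J1 by (simp flip: power_Suc)
        then show ?thesis unfolding x_def ns using qpos by (simp add: field_simps)
      qed
      ultimately show ?thesis by linarith
    qed
    have JL: "J + s \<le> L"
    proof -
      have "exp (s * ln (real q)) = exp ((1-s)*0 + s * ln (real q))" by simp
      also have "\<dots> \<le> (1-s)*exp 0 + s*exp (ln (real q))" by (rule exp_cvx) (use s01 in auto)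
      also have "\<dots> \<le> 1 + s * real q" using qpos s01 by simp
      finally have "s * ln (real q) \<le> ln (1 + s * real q)"
        using s01 qpos by (subst ln_ge_iff) (auto intro: add_pos_nonneg)
      moreover have "ln (real n) = real J * ln (real q) + ln (1 + s * real q)"
      proof -
        have "1 + s * real q > 0" using s01 qpos by (simp add: add_pos_nonneg)
        then show ?thesis unfolding ns using qpos by (simp add: ln_mult ln_realpow)
      qed
      ultimately have "(J + s) * ln (real q) \<le> ln (real n)" by (simp add: algebra_simps)
      then show ?thesis unfolding L_def using lnq by (simp add: field_simps)
    qed
    have "E * (J+s) \<le> E * x" "E * (J+s) \<le> E * L" using Jx JL Eb by (auto intro: mult_left_mono)
    then show ?thesis using eJ by linarith
  qed
  then show ?thesis unfolding T_def[symmetric] E_def[symmetric] x_def[symmetric] L_def[symmetric]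
    by (auto simp: min_def)
qed



lemma prime_elem_dvd_prodE:
  fixes p :: "'a::comm_semiring_1 "
  assumes "prime_elem p" "finite A" "p dvd prod f A"
  shows "\<exists>x\<in>A. p dvd f x"
  using assms(2,3)
proof (induction A rule: finite_induct)
  case empty then show ?case using assms(1) by (auto simp: prime_elem_def)
next
  case (insert x F)
  then show ?case using assms(1) by (auto simp: prime_elem_dvd_mult_iff)
qed

lemma card_deg_less:
  assumes "d \<ge> 1"
  shows "finite {r::'a::{field,finite} poly. degree r < d}"
    "card {r::'a::{field,finite} poly. degree r < d} = CARD('a)^d"
proof -
  let ?L = "{xs::'a list. set xs \<subseteq> UNIV \<and> length xs = d}"
  have bij: "bij_betw Poly ?L {r::'a poly. degree r < d}"
  proof (rule bij_betwI')
    fix xs ys assume "xs \<in> ?L" "ys \<in> ?L"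
    then have l: "length xs = d" "length ys = d" by auto
    show "(Poly xs = Poly ys) = (xs = ys)"
    proof
      assume "Poly xs = Poly ys"
      then have "\<And>i. nth_default 0 xs i = nth_default 0 ys i" by (metis coeff_Poly_eq)
      then show "xs = ys" using l by (intro nth_equalityI) (auto simp: nth_default_def split: if_splits, metis)
    qed simp
  next
    fix xs assume "xs \<in> ?L"
    then have l: "length xs = d" by simp
    have "degree (Poly xs) \<le> d - 1"
      by (rule degree_le) (use l assms in \<open>auto simp: nth_default_def\<close>)
    then show "Poly xs \<in> {r. degree r < d}" using assms by auto
  next
    fix r :: "'a poly" assume "r \<in> {r. degree r < d}"
    then have dr: "degree r < d" by simp
    have "Poly (map (coeff r) [0..<d]) = r"
    proof (rule poly_eqI)
      fix i show "coeff (Poly (map (coeff r) [0..<d])) i = coeff r i"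
        using dr by (auto simp: nth_default_def coeff_eq_0)
    qed
    then show "\<exists>xs\<in>?L. r = Poly xs" by (intro bexI[of _ "map (coeff r) [0..<d]"]) auto
  qed
  have "finite ?L" by (rule finite_lists_length_eq) simp
  then show "finite {r::'a::{field,finite} poly. degree r < d}" using bij bij_betw_finite by blast
  have "card ?L = CARD('a)^d" by (rule card_lists_length_eq) simp
  then show "card {r::'a::{field,finite} poly. degree r < d} = CARD('a)^d"
    using bij bij_betw_same_card by metis
qed
lemma irreducible_deg_pos:
  fixes p :: "'a::field poly"
  assumes "irreducible p" shows "p \<noteq> 0" "degree p \<ge> 1"
proof -
  show p0: "p \<noteq> 0" using assms by auto
  have "\<not> is_unit p" using assms unfolding irreducible_def by auto
  then show "degree p \<ge> 1" using is_unit_iff_degree[OF p0] by auto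
qed

lemma fermat_poly:
  fixes p a :: "'a::{field,finite} poly"
  assumes irr: "irreducible p" and nd: "\<not> p dvd a"
  shows "p dvd a ^ (CARD('a)^degree p - 1) - 1"
proof -
  define d where "d = degree p"
  have p0: "p \<noteq> 0" and d1: "d \<ge> 1" using irreducible_deg_pos[OF irr] by (auto simp: d_def)
  have pr: "prime_elem p" by (rule field_poly_irreducible_imp_prime[OF irr])
  define S where "S = {r::'a poly. degree r < d} - {0}"
  have finS: "finite S" using card_deg_less(1)[OF d1] by (simp add: S_def)
  have cardS: "card S = CARD('a)^d - 1"
    using card_deg_less[OF d1, where 'a='a] d1 by (simp add: S_def card_Diff_singleton)
  have ndr: "\<not> p dvd r" if "r \<in> S" for r
  proof
    assume "p dvd r"
    then have "degree p \<le> degree r" using that by (intro dvd_imp_degree_le) (auto simp: S_def)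
    then show False using that by (auto simp: S_def d_def)
  qed
  define \<phi> where "\<phi> r = (a*r) mod p" for r
  have mapsto: "\<phi> r \<in> S" if r: "r \<in> S" for r
  proof -
    have "\<phi> r \<noteq> 0"
    proof
      assume "\<phi> r = 0"
      then have "p dvd a * r" by (simp add: \<phi>_def mod_eq_0_iff_dvd)
      then show False using pr nd ndr[OF r] by (simp add: prime_elem_dvd_mult_iff)
    qed
    moreover have "degree (\<phi> r) < d" using calculation p0 unfolding d_def \<phi>_def
      by (intro degree_mod_less') auto
    ultimately show ?thesis by (simp add: S_def)
  qed
  have inj: "inj_on \<phi> S"
  proof (rule inj_onI)
    fix r1 r2 assume r: "r1 \<in> S" "r2 \<in> S" "\<phi> r1 = \<phi> r2"
    then have "p dvd a * r1 - a * r2" by (simp add: \<phi>_def mod_eq_dvd_iff)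
    then have "p dvd a * (r1 - r2)" by (simp add: right_diff_distrib)
    then have dv: "p dvd r1 - r2" using pr nd by (simp add: prime_elem_dvd_mult_iff)
    show "r1 = r2"
    proof (rule ccontr)
      assume "r1 \<noteq> r2"
      then have "degree p \<le> degree (r1 - r2)" using dv by (intro dvd_imp_degree_le) auto
      moreover have "degree (r1 - r2) < d" using r by (intro degree_diff_less) (auto simp: S_def)
      ultimately show False by (simp add: d_def)
    qed
  qed
  have img: "\<phi> ` S = S" using finS mapsto inj by (intro endo_inj_surj) auto
  define Q where "Q = (\<Prod>r\<in>S. r)"
  have "Q = (\<Prod>r\<in>\<phi> ` S. r)" unfolding Q_def img ..
  also have "\<dots> = (\<Prod>r\<in>S. \<phi> r)" using prod.reindex[OF inj, of id] by simp
  finally have "Q mod p = (\<Prod>r\<in>S. (a*r) mod p) mod p" by (simp add: \<phi>_def)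
  also have "\<dots> = (\<Prod>r\<in>S. a*r) mod p" by (rule mod_prod_eq)
  also have "(\<Prod>r\<in>S. a*r) = a ^ card S * Q" by (simp add: Q_def prod.distrib)
  finally have "p dvd Q - a ^ card S * Q" by (simp add: mod_eq_dvd_iff)
  then have "p dvd (a ^ card S - 1) * Q" by (simp add: algebra_simps dvd_diff_commute)
  moreover have "\<not> p dvd Q" using prime_elem_dvd_prodE[OF pr finS, of id] ndr by (auto simp: Q_def)
  ultimately have "p dvd a ^ card S - 1" using pr by (simp add: prime_elem_dvd_mult_iff)
  then show ?thesis by (simp add: cardS d_def)
qed

lemma irr_dvd_X:
  fixes p :: "'a::{field,finite} poly"
  assumes irr: "irreducible p"
  shows "p dvd [:0,1:] ^ (CARD('a)^degree p) - [:0,1:]"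
proof -
  define N where "N = CARD('a)^degree p - 1"
  have "CARD('a)^degree p \<ge> 1" by simp
  then have NS: "CARD('a)^degree p = Suc N" by (simp add: N_def)
  have eq: "[:0,1:] ^ (CARD('a)^degree p) - [:0,1:] = [:0,1::'a:] * ([:0,1:]^N - 1)"
    unfolding NS by (simp add: algebra_simps)
  show ?thesis
  proof (cases "p dvd [:0,1:]")
    case True then show ?thesis unfolding eq by (rule dvd_mult2)
  next
    case False
    then have "p dvd [:0,1:]^N - 1" using fermat_poly[OF irr] by (simp add: N_def)
    then show ?thesis unfolding eq by (rule dvd_mult)
  qed
qed

lemma monic_irr_dvd_eq:
  fixes p p' :: "'a::field poly"
  assumes "lead_coeff p = 1" "irreducible p" "lead_coeff p' = 1" "irreducible p'" "p dvd p'"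
  shows "p = p'"
proof -
  obtain k where k: "p' = p * k" using assms(5) by (elim dvdE)
  have "\<not> is_unit p" using assms(2) unfolding irreducible_def by auto
  then have "is_unit k" using irreducibleD[OF assms(4) k] by auto
  then have k0': "k \<noteq> 0" by (metis not_is_unit_0)
  then have k0: "k \<noteq> 0" "degree k = 0" using is_unit_iff_degree[of k] \<open>is_unit k\<close> by auto
  then obtain c where c: "k = [:c:]" by (metis degree_eq_zeroE)
  have "lead_coeff p' = lead_coeff p * lead_coeff k" using k by (simp add: lead_coeff_mult)
  then have "c = 1" using assms(1,3) c by simp
  then show ?thesis using k c by simp
qed

lemma prod_monic_irr_dvd:
  fixes g :: "'a::field poly"
  assumes "finite D" "\<And>p. p \<in> D \<Longrightarrow> lead_coeff p = 1 \<and> irreducible p \<and> p dvd g"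
  shows "(\<Prod>p\<in>D. p) dvd g"
  using assms
proof (induction D rule: finite_induct)
  case empty then show ?case by simp
next
  case (insert p F)
  have IH: "(\<Prod>p\<in>F. p) dvd g" using insert by auto
  have p: "lead_coeff p = 1" "irreducible p" "p dvd g" using insert(4) by auto
  have pr: "prime_elem p" by (rule field_poly_irreducible_imp_prime[OF p(2)])
  have nd: "\<not> p dvd (\<Prod>p\<in>F. p)"
  proof
    assume "p dvd (\<Prod>p\<in>F. p)"
    then obtain p' where "p' \<in> F" "p dvd p'" using prime_elem_dvd_prodE[OF pr insert(1), of id] by auto
    then have "p = p'" using p insert(4) by (intro monic_irr_dvd_eq) auto
    then show False using \<open>p' \<in> F\<close> insert(2) by simp
  qed
  obtain k where k: "g = (\<Prod>p\<in>F. p) * k" using IH by (elim dvdE)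
  then have "p dvd k" using p(3) nd pr by (simp add: prime_elem_dvd_mult_iff)
  then obtain m where "k = p * m" by (elim dvdE)
  then have "g = (\<Prod>p\<in>insert p F. p) * m" using k insert(1,2) by (simp add: algebra_simps)
  then show ?case by simp
qed

lemma degree_prod_monic_irr:
  fixes g :: "'a::field poly"
  assumes "finite D" "\<And>p. p \<in> D \<Longrightarrow> lead_coeff p = 1 \<and> irreducible p \<and> p dvd g" "g \<noteq> 0"
  shows "(\<Sum>p\<in>D. degree p) \<le> degree g"
proof -
  have "degree (\<Prod>p\<in>D. p) = (\<Sum>p\<in>D. degree p)"
    using assms(2) by (intro degree_prod_eq_sum_degree) (auto dest: irreducible_deg_pos(1))
  moreover have "degree (\<Prod>p\<in>D. p) \<le> degree g"
    using prod_monic_irr_dvd[OF assms(1,2)] assms(3) by (intro dvd_imp_degree_le) auto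
  ultimately show ?thesis by simp
qed

lemma count_irr:
  fixes D :: "'a::{field,finite} poly set"
  assumes "finite D" "\<And>p. p \<in> D \<Longrightarrow> lead_coeff p = 1 \<and> irreducible p \<and> degree p = d" "d \<ge> 1"
  shows "card D * d \<le> CARD('a)^d"
proof -
  define N where "N = CARD('a)^d"
  have N2: "N \<ge> 2"
  proof -
    have "(2::nat) \<le> CARD('a)"
    proof -
      have "{0::'a, 1} \<subseteq> UNIV" by simp
      then have "card {0::'a,1} \<le> CARD('a)" by (intro card_mono) auto
      then show ?thesis by simp
    qed
    also have "\<dots> \<le> CARD('a)^d" using assms(3) by (simp add: self_le_power)
    finally show ?thesis by (simp add: N_def)
  qed
  define g :: "'a poly" where "g = [:0,1:]^N - [:0,1:]"
  have dg: "degree g = N"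
  proof -
    have "degree ([:0,1::'a:]^N) = N" by (simp add: degree_power_eq)
    moreover have "degree (- [:0,1::'a:]) = 1" by simp
    ultimately have "degree ([:0,1::'a:]^N + - [:0,1:]) = degree ([:0,1::'a:]^N)" using N2
      by (intro degree_add_eq_left) auto
    with \<open>degree ([:0,1::'a:]^N) = N\<close> have "degree ([:0,1::'a:]^N + - [:0,1:]) = N" by simp
    then show ?thesis unfolding g_def diff_conv_add_uminus .
  qed
  then have g0: "g \<noteq> 0" using N2 by auto
  have "(\<Sum>p\<in>D. degree p) \<le> degree g"
    using assms(2) irr_dvd_X g0 by (intro degree_prod_monic_irr[OF assms(1)]) (auto simp: g_def N_def)
  moreover have "(\<Sum>p\<in>D. degree p) = card D * d" using assms(2) by simp
  ultimately show ?thesis using dg by (simp add: N_def)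
qed


theorem lemma4:
  fixes f :: "'a::{field,finite} poly"
  assumes "degree f \<ge> 2"
  shows "E_fun f \<le> 1 + exp euler_mascheroni *
           min (real (degree f) / real CARD('a)) (ln (real (degree f)) / ln (real CARD('a)))"
proof -
  define P where "P = {p::'a poly. lead_coeff p = 1 \<and> irreducible p \<and> p dvd f}"
  define q where "q = CARD('a)"
  have f0: "f \<noteq> 0" using assms by auto
  have q2: "q \<ge> 2"
  proof -
    have "{0::'a, 1} \<subseteq> UNIV" by simp
    then have "card {0::'a,1} \<le> CARD('a)" by (intro card_mono) auto
    then show ?thesis by (simp add: q_def)
  qed
  have finP: "finite P"
  proof (rule finite_subset)
    show "P \<subseteq> {r::'a poly. degree r < degree f + 1}"
      using f0 by (auto simp: P_def dest: dvd_imp_degree_le)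
    show "finite {r::'a poly. degree r < degree f + 1}" by (rule card_deg_less(1)) simp
  qed
  have g1: "degree p \<ge> 1" if "p \<in> P" for p
    using that irreducible_deg_pos(2) by (auto simp: P_def)
  have sumg: "(\<Sum>p\<in>P. degree p) \<le> degree f"
    by (rule degree_prod_monic_irr[OF finP _ f0]) (auto simp: P_def)
  have cnt: "card {p\<in>P. degree p = d} * d \<le> q^d" if "d \<ge> 1" for d
  proof -
    have fin': "finite {p\<in>P. degree p = d}" using finP by simp
    show ?thesis unfolding q_def by (intro count_irr[OF fin'] that) (auto simp: P_def)
  qed
  have "E_fun f = (\<Prod>p\<in>P. 1 + (1 / real q)^(degree p))"
    unfolding E_fun_def P_def pnorm_def q_def by (simp add: power_one_over)
  also have "\<dots> \<le> (\<Prod>p\<in>P. exp ((1 / real q)^(degree p)))"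
    by (intro prod_mono) (auto simp: add_nonneg_nonneg exp_ge_add_one_self)
  also have "\<dots> = exp (\<Sum>p\<in>P. (1 / real q)^(degree p))"
    by (simp add: exp_sum finP)
  also have "\<dots> \<le> 1 + exp euler_mascheroni * min (real (degree f) / real q) (ln (real (degree f)) / ln (real q))"
    by (rule analytic[OF finP g1 sumg cnt q2 assms])
  finally show ?thesis by (simp add: q_def)
qed

end
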